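(* Let $A$ be a complex square matrix, $y$ a complex vector, and $k,m\ge1$ integers. Suppose there is a polynomial $P$ of degree at most $k$ with $P(0)=0$ such that the Hermitian part $H=\tfrac12(P(A)^*+P(A))$ of $P(A)$ is positive definite or negative definite. Consider an operator coefficient method of degree $k$ and order $m$ (an iteration producing $x_0,x_1,x_2,\ldots$) whose selection criterion chooses $x_{n+1}$ to minimize the $2$-norm of the residual $\|r_{n+1}\|_2$ (respectively of the error $\|e_{n+1}\|_2$) over its selection set, and whose selection set at each step contains the affine space $$x_n+\operatorname{span}\{r_n,\;Ar_n,\;A^2r_n,\;\ldots,\;A^{k-1}r_n\}.$$ Then the method converges, and at each step the minimized norm declines by at least the factor $$\sqrt{1-\left[\frac{\min|\lambda(H)|}{\|P(A)\|_2}\right]^2}<1,$$ i.e. $\|r_{n+1}\|_2\le \rho\|r_n\|_2$ (respectively $\|e_{n+1}\|_2\le\rho\|e_n\|_2$) with $\rho$ equal to this factor.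
   Context: For an iterate $x_j$, $r_j=y-Ax_j$ is its residual and $e_j=x_*-x_j$ its error, $x_*$ being the exact solution of $Ax=y$. $\lambda(H)$ is the set of eigenvalues of $H$; $\|\cdot\|_2$ is the Euclidean norm and induced matrix norm. An operator coefficient method of degree $k$ and order $m$, oc$(k,m)$, starts from $x_0$ (and optionally $x_{-1},\ldots,x_{1-m}$) and at each step chooses the next iterate, by some selection criterion, from a selection set that is a subset of the span of the vectors $x_{n},x_{n-1},\ldots,x_{n+1-m}$ and $A^{i}r_{n+1-j}$ for $0\le i\le k-1$, $1\le j\le m$ (in the homogeneous case with the coefficients of the $x$-vectors constrained to sum to $1$); the selection set need not use all of these vectors. *)

theory Defs
  imports "HOL-Analysis.Analysis" "HOL-Computational_Algebra.Polynomial"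
begin

text \<open>Complex n x n matrices are \<open>complex^'n^'n\<close>, vectors are \<open>complex^'n\<close>
  (the norm on \<open>complex^'n\<close> is the Euclidean 2-norm).\<close>

primrec mat_pow :: "complex^'n^'n \<Rightarrow> nat \<Rightarrow> complex^'n^'n" where
  "mat_pow A 0 = mat 1"
| "mat_pow A (Suc d) = A ** mat_pow A d"

definition poly_mat :: "complex poly \<Rightarrow> complex^'n^'n \<Rightarrow> complex^'n^'n" where
  "poly_mat P A = (\<chi> i j. \<Sum>d\<le>degree P. coeff P d * (mat_pow A d) $ i $ j)"

definition cadjoint :: "complex^'n^'n \<Rightarrow> complex^'n^'n" where
  "cadjoint M = (\<chi> i j. cnj (M $ j $ i))"

definition herm_part :: "complex^'n^'n \<Rightarrow> complex^'n^'n" where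
  "herm_part M = (\<chi> i j. (cadjoint M $ i $ j + M $ i $ j) / 2)"

definition qform :: "complex^'n^'n \<Rightarrow> complex^'n \<Rightarrow> complex" where
  "qform M x = (\<Sum>i\<in>UNIV. cnj (x $ i) * (M *v x) $ i)"

definition hermitian :: "complex^'n^'n \<Rightarrow> bool" where
  "hermitian M \<longleftrightarrow> cadjoint M = M"

definition pos_definite :: "complex^'n^'n \<Rightarrow> bool" where
  "pos_definite M \<longleftrightarrow> hermitian M \<and> (\<forall>x. x \<noteq> 0 \<longrightarrow> qform M x \<in> \<real> \<and> Re (qform M x) > 0)"

definition neg_definite :: "complex^'n^'n \<Rightarrow> bool" where
  "neg_definite M \<longleftrightarrow> hermitian M \<and> (\<forall>x. x \<noteq> 0 \<longrightarrow> qform M x \<in> \<real> \<and> Re (qform M x) < 0)"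

definition eigenvalues :: "complex^'n^'n \<Rightarrow> complex set" where
  "eigenvalues M = {l. \<exists>v. v \<noteq> 0 \<and> M *v v = l *s v}"

definition mat_norm2 :: "complex^'n^'n \<Rightarrow> real" where
  "mat_norm2 M = onorm (\<lambda>v. M *v v)"

definition residual :: "complex^'n^'n \<Rightarrow> complex^'n \<Rightarrow> complex^'n \<Rightarrow> complex^'n" where
  "residual A y z = y - A *v z"

definition krylov_affine :: "complex^'n^'n \<Rightarrow> nat \<Rightarrow> complex^'n \<Rightarrow> complex^'n \<Rightarrow> (complex^'n) set" where
  "krylov_affine A k x r = {x + (\<Sum>i<k. c i *s (mat_pow A i *v r)) | c :: nat \<Rightarrow> complex. True}"

text \<open>Admissible selection set of an oc(k,m) method at step n (iterates indexed by integers,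
  so that the optional starting vectors x_{-1},...,x_{1-m} are available): complex span of
  \<open>x_n,...,x_{n+1-m}\<close> and \<open>A^i r_{n+1-j}\<close> for \<open>0\<le>i\<le>k-1\<close>, \<open>1\<le>j\<le>m\<close>.\<close>
definition oc_span :: "complex^'n^'n \<Rightarrow> complex^'n \<Rightarrow> nat \<Rightarrow> nat \<Rightarrow> (int \<Rightarrow> complex^'n) \<Rightarrow> int \<Rightarrow> (complex^'n) set" where
  "oc_span A y k m x n =
     {(\<Sum>j<m. a j *s x (n - int j)) + (\<Sum>j\<in>{1..m}. \<Sum>i<k. b i j *s (mat_pow A i *v residual A y (x (n + 1 - int j))))
       | (a :: nat \<Rightarrow> complex) (b :: nat \<Rightarrow> nat \<Rightarrow> complex). True}"

end

theory Submission imports Defs begin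

lemma mv_scaleR: "(K::complex^'n^'n) *v (r *\<^sub>R v) = r *\<^sub>R (K *v v)"
  using matrix_vector_mul_bounded_linear[of K] by (simp add: linear_simps)

lemma mv_smult: "(K::complex^'n^'n) *v (c *s v) = c *s (K *v v)"
  by (simp add: vec_eq_iff matrix_vector_mult_def sum_distrib_left algebra_simps)

lemma mv_neg: "(K::complex^'n^'n) *v (- v) = - (K *v v)"
  by (simp add: vec_eq_iff matrix_vector_mult_def sum_negf)

lemma negM_mv: "(- K::complex^'n^'n) *v v = - (K *v v)"
  by (simp add: vec_eq_iff matrix_vector_mult_def sum_negf)

lemma scaleR_smult: "r *\<^sub>R (v::complex^'n) = complex_of_real r *s v"
  unfolding vec_eq_iff vector_scaleR_component vector_smult_component by (simp add: scaleR_conv_of_real)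

lemma inner_cplx: "inner (a::complex) b = Re (cnj a * b)"
  by (simp add: inner_complex_def)

lemma inner_adj: "inner u (cadjoint K *v w) = inner ((K::complex^'n^'n) *v u) w"
proof -
  have "inner u (cadjoint K *v w) = (\<Sum>i\<in>UNIV. \<Sum>j\<in>UNIV. Re (cnj (u$i) * (cnj (K$j$i) * w$j)))"
    by (simp add: inner_vec_def inner_cplx cadjoint_def matrix_vector_mult_def sum_distrib_left Re_sum)
  also have "\<dots> = (\<Sum>j\<in>UNIV. \<Sum>i\<in>UNIV. Re (cnj (u$i) * (cnj (K$j$i) * w$j)))"
    by (rule sum.swap)
  also have "\<dots> = (\<Sum>j\<in>UNIV. Re (cnj (\<Sum>i\<in>UNIV. K$j$i * u$i) * w$j))"
    unfolding cnj_sum sum_distrib_right Re_sum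
    by (intro sum.cong refl) (simp add: mult.commute mult.left_commute)
  also have "\<dots> = inner (K *v u) w"
    by (simp add: inner_vec_def inner_cplx matrix_vector_mult_def)
  finally show ?thesis .
qed

lemma re_qform: "Re (qform K v) = inner v ((K::complex^'n^'n) *v v)"
  by (simp add: qform_def inner_vec_def inner_cplx Re_sum)

lemma herm_mv: "herm_part K *v v = (1/2::real) *\<^sub>R (cadjoint K *v v + (K::complex^'n^'n) *v v)"
  unfolding vec_eq_iff vector_scaleR_component vector_add_component
  by (simp add: herm_part_def matrix_vector_mult_def scaleR_conv_of_real
      sum_divide_distrib[symmetric] sum.distrib add_divide_distrib distrib_right)

lemma herm_inner: "inner v (herm_part K *v v) = inner v ((K::complex^'n^'n) *v v)"
  by (simp add: herm_mv inner_add_right inner_adj inner_commute)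

lemma herm_neg: "herm_part (- K) = - herm_part (K::complex^'n^'n)"
  by (simp add: vec_eq_iff herm_part_def cadjoint_def minus_divide_left)

lemma eig_neg: "cmod ` eigenvalues (- H) = cmod ` eigenvalues (H::complex^'n^'n)"
proof -
  have "eigenvalues (- H) = uminus ` eigenvalues H"
  proof (rule set_eqI, rule iffI)
    fix l assume "l \<in> eigenvalues (- H)"
    then obtain v where "v \<noteq> 0" "(- H) *v v = l *s v" by (auto simp: eigenvalues_def)
    then have "H *v v = (- l) *s v" by (metis negM_mv vector_smult_lneg minus_minus)
    with \<open>v \<noteq> 0\<close> show "l \<in> uminus ` eigenvalues H"
      by (auto simp: eigenvalues_def image_iff intro!: exI[of _ "-l"])
  next
    fix l assume "l \<in> uminus ` eigenvalues H"
    then obtain v l' where "l = - l'" "v \<noteq> 0" "H *v v = l' *s v" by (auto simp: eigenvalues_def)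
    then show "l \<in> eigenvalues (- H)" by (auto simp: eigenvalues_def negM_mv vector_smult_lneg)
  qed
  then show ?thesis by (simp add: image_image)
qed

lemma norm_neg: "mat_norm2 (- M) = mat_norm2 (M::complex^'n^'n)"
  using onorm_neg[of "\<lambda>v. M *v v"] by (simp add: mat_norm2_def negM_mv)

lemma negdef: "neg_definite H \<Longrightarrow> pos_definite (- (H::complex^'n^'n))"
  by (auto simp: neg_definite_def pos_definite_def hermitian_def cadjoint_def vec_eq_iff qform_def
      negM_mv sum_negf)

lemma quad_neg: "(b::real) \<ge> 0 \<Longrightarrow> 2 * (- a/(b+1)) * a + (- a/(b+1))\<^sup>2 * b = a\<^sup>2 * (- b - 2) / (b + 1)\<^sup>2"
proof -
  assume "b \<ge> 0" then have h: "b + 1 \<noteq> 0" by simp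
  show ?thesis by (simp add: power_divide h divide_simps) (simp add: power2_eq_square algebra_simps)
qed

lemma pd_pos: "pos_definite H \<Longrightarrow> v \<noteq> 0 \<Longrightarrow> inner v ((H::complex^'n^'n) *v v) > 0"
  by (metis pos_definite_def re_qform)

lemma pd_sym: "pos_definite H \<Longrightarrow> inner u ((H::complex^'n^'n) *v w) = inner (H *v u) w"
  by (metis pos_definite_def hermitian_def inner_adj)

lemma rayleigh:
  fixes H :: "complex^'n^'n"
  assumes pd: "pos_definite H"
  shows "\<exists>\<mu>>0. (\<exists>v0. v0 \<noteq> 0 \<and> H *v v0 = complex_of_real \<mu> *s v0) \<and> (\<forall>v. \<mu> * inner v v \<le> inner v (H *v v))"
proof -
  define g where "g v = inner v (H *v v)" for v :: "complex^'n"
  have cont: "continuous_on (sphere 0 1) g"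
    unfolding g_def by (intro continuous_intros linear_continuous_on matrix_vector_mul_bounded_linear)
  have ne: "sphere (0::complex^'n) 1 \<noteq> {}" by simp
  obtain v0 where v0: "v0 \<in> sphere 0 1" and min: "\<And>w. w \<in> sphere 0 1 \<Longrightarrow> g v0 \<le> g w"
    using continuous_attains_inf[OF compact_sphere ne cont] by blast
  define \<mu> where "\<mu> = g v0"
  have nv0: "norm v0 = 1" using v0 by simp
  then have v0nz: "v0 \<noteq> 0" by auto
  have mupos: "\<mu> > 0" unfolding \<mu>_def g_def using pd_pos[OF pd v0nz] .
  have gscale: "g (r *\<^sub>R v) = r\<^sup>2 * g v" for r v
    by (simp add: g_def mv_scaleR power2_eq_square)
  have lb: "\<mu> * inner v v \<le> g v" for v
  proof (cases "v = 0")
    case True then show ?thesis by (simp add: g_def)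
  next
    case False
    then have nv: "norm v > 0" by simp
    have "(inverse (norm v)) *\<^sub>R v \<in> sphere 0 1" using False by simp
    then have "\<mu> \<le> g (inverse (norm v) *\<^sub>R v)" using min \<mu>_def by blast
    also have "\<dots> = g v / (norm v)\<^sup>2" by (simp add: gscale power_inverse divide_inverse)
    finally have "\<mu> * (norm v)\<^sup>2 \<le> g v" using nv by (simp add: field_simps)
    then show ?thesis by (simp add: power2_norm_eq_inner)
  qed
  define \<phi> where "\<phi> w = g w - \<mu> * inner w w" for w
  have phi0: "\<phi> w \<ge> 0" for w using lb[of w] by (simp add: \<phi>_def)
  have phiv0: "\<phi> v0 = 0" using nv0 by (simp add: \<phi>_def \<mu>_def power2_norm_eq_inner[symmetric])
  define d where "d = H *v v0 - \<mu> *\<^sub>R v0"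
  have expand: "\<phi> (v0 + t *\<^sub>R d) = 2 * t * inner d d + t\<^sup>2 * \<phi> d" for t
  proof -
    have s: "inner v0 (H *v d) = inner (H *v v0) d" by (rule pd_sym[OF pd])
    have "\<phi> (v0 + t *\<^sub>R d) = \<phi> v0 + t * (inner (H *v v0) d + inner d (H *v v0) - 2 * \<mu> * inner v0 d) + t\<^sup>2 * \<phi> d"
      unfolding \<phi>_def g_def
      by (simp add: matrix_vector_right_distrib mv_scaleR inner_add_left inner_add_right s
          power2_eq_square algebra_simps inner_commute[of d v0])
    also have "inner (H *v v0) d + inner d (H *v v0) - 2 * \<mu> * inner v0 d = 2 * inner d d"
      unfolding d_def by (simp add: inner_diff_left inner_diff_right inner_commute algebra_simps)
    finally show ?thesis using phiv0 by simp
  qed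
  have dd: "inner d d = 0"
  proof (rule ccontr)
    assume "inner d d \<noteq> 0"
    then have a: "inner d d > 0" by (simp add: order_le_neq_trans)
    define b where "b = \<phi> d"
    have b: "b \<ge> 0" using phi0 b_def by simp
    define t where "t = - inner d d / (b + 1)"
    have "0 \<le> 2 * t * inner d d + t\<^sup>2 * b" using phi0[of "v0 + t *\<^sub>R d"] expand[of t] b_def by simp
    also have "\<dots> = (inner d d)\<^sup>2 * (- b - 2) / (b + 1)\<^sup>2"
      unfolding t_def by (rule quad_neg[OF b])
    also have "\<dots> < 0" using a b by (intro divide_neg_pos mult_pos_neg) auto
    finally show False by simp
  qed
  then have "d = 0" by simp
  then have "H *v v0 = complex_of_real \<mu> *s v0" by (simp add: d_def scaleR_smult)
  then show ?thesis using mupos v0nz lb unfolding g_def by blast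
qed

lemma inner_smult_self: "inner v (l *s (v::complex^'n)) = Re l * inner v v"
proof -
  have "inner z (l * z) = Re l * inner z z" for z :: complex
    by (simp add: inner_complex_def algebra_simps)
  then show ?thesis by (simp add: inner_vec_def sum_distrib_left)
qed

lemma core:
  fixes M :: "complex^'n^'n"
  assumes pd: "pos_definite (herm_part M)"
  defines "\<rho> \<equiv> sqrt (1 - (Inf (cmod ` eigenvalues (herm_part M)) / mat_norm2 M)\<^sup>2)"
  shows "\<rho> < 1 \<and> 0 \<le> \<rho> \<and> (\<forall>v. \<exists>t::real. norm (v - t *\<^sub>R (M *v v)) \<le> \<rho> * norm v)
     \<and> (\<forall>v. M *v v = 0 \<longrightarrow> v = 0)"
proof -
  define H where "H = herm_part M"
  obtain \<mu> v0 where mupos: "\<mu> > 0" and v0: "v0 \<noteq> 0" "H *v v0 = complex_of_real \<mu> *s v0"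
    and lb: "\<And>v. \<mu> * inner v v \<le> inner v (H *v v)"
    using rayleigh[OF pd] unfolding H_def by blast
  have HM: "inner v (H *v v) = inner v (M *v v)" for v unfolding H_def by (rule herm_inner)
  have eigb: "\<mu> \<le> cmod l" if lH: "l \<in> eigenvalues H" for l
  proof -
    obtain v where v: "v \<noteq> 0" "H *v v = l *s v" using lH by (auto simp: eigenvalues_def)
    have "\<mu> * inner v v \<le> Re l * inner v v" using lb[of v] v by (simp add: inner_smult_self)
    moreover have "inner v v > 0" using v by simp
    ultimately have "\<mu> \<le> Re l" by simp
    then show ?thesis using abs_Re_le_cmod[of l] by linarith
  qed
  have "\<mu> \<in> cmod ` eigenvalues H"
    using v0 mupos by (auto simp: eigenvalues_def image_iff intro!: bexI[of _ "complex_of_real \<mu>"])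
  then have Inf: "Inf (cmod ` eigenvalues H) = \<mu>"
    using eigb by (intro cInf_eq_minimum) auto
  define N where "N = mat_norm2 M"
  have Nb: "norm (M *v v) \<le> N * norm v" for v
    unfolding N_def mat_norm2_def by (rule onorm[OF matrix_vector_mul_bounded_linear])
  have pv: "\<mu> * (norm v)\<^sup>2 \<le> inner v (M *v v)" for v
    using lb[of v] HM[of v] by (simp add: power2_norm_eq_inner)
  have inj: "\<forall>v. M *v v = 0 \<longrightarrow> v = 0"
  proof (intro allI impI)
    fix v assume "M *v v = 0"
    then have "inner v (H *v v) = 0" using HM[of v] by simp
    then show "v = 0" using pd_pos[OF pd[folded H_def], of v] by (cases "v = 0") auto
  qed
  have "M *v v0 \<noteq> 0" using inj v0 by blast
  then have "0 < norm (M *v v0)" by simp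
  also have "\<dots> \<le> N * norm v0" by (rule Nb)
  finally have Npos: "N > 0" using v0 by (simp add: zero_less_mult_iff)
  define q where "q = (\<mu> / N)\<^sup>2"
  have qpos: "q > 0" unfolding q_def using mupos Npos by simp
  have rho: "\<rho> = sqrt (1 - q)" unfolding \<rho>_def q_def N_def H_def[symmetric] Inf ..
  have key: "(norm (v - t *\<^sub>R (M *v v)))\<^sup>2 \<le> (1 - q) * (norm v)\<^sup>2"
    if v: "v \<noteq> 0" and t: "t = inner v (M *v v) / (norm (M *v v))\<^sup>2" for v t
  proof -
    define u where "u = M *v v"
    define p where "p = inner v u"
    have nv: "norm v > 0" using v by simp
    have p1: "\<mu> * (norm v)\<^sup>2 \<le> p" using pv[of v] unfolding p_def u_def .
    have ppos: "p > 0" using p1 mupos nv by (smt (verit) mult_pos_pos zero_less_power)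
    have unz: "u \<noteq> 0" using ppos unfolding p_def by auto
    then have nu: "norm u > 0" by simp
    have nub: "norm u \<le> N * norm v" unfolding u_def by (rule Nb)
    have "(norm (v - t *\<^sub>R u))\<^sup>2 = (norm v)\<^sup>2 - 2 * t * p + t\<^sup>2 * (norm u)\<^sup>2"
      unfolding power2_norm_eq_inner p_def
      by (simp add: inner_diff_left inner_diff_right inner_commute power2_eq_square algebra_simps)
    also have "\<dots> = (norm v)\<^sup>2 - p\<^sup>2 / (norm u)\<^sup>2"
      using nu unfolding t u_def[symmetric] p_def[symmetric] by (simp add: field_simps power2_eq_square)
    finally have e1: "(norm (v - t *\<^sub>R u))\<^sup>2 = (norm v)\<^sup>2 - p\<^sup>2 / (norm u)\<^sup>2" .
    have e2: "p\<^sup>2 / (norm u)\<^sup>2 \<ge> q * (norm v)\<^sup>2"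
    proof -
      have "(\<mu> * (norm v)\<^sup>2)\<^sup>2 \<le> p\<^sup>2"
        using p1 mupos nv by (intro power_mono) auto
      moreover have "(norm u)\<^sup>2 \<le> (N * norm v)\<^sup>2" using nub nu by (intro power_mono) auto
      ultimately have "(\<mu> * (norm v)\<^sup>2)\<^sup>2 / (N * norm v)\<^sup>2 \<le> p\<^sup>2 / (norm u)\<^sup>2"
        using nu nv Npos by (intro frac_le) auto
      moreover have "(\<mu> * (norm v)\<^sup>2)\<^sup>2 / (N * norm v)\<^sup>2 = q * (norm v)\<^sup>2"
        unfolding q_def using nv Npos by (simp add: field_simps power2_eq_square)
      ultimately show ?thesis by simp
    qed
    have e3: "(1 - q) * (norm v)\<^sup>2 = (norm v)\<^sup>2 - q * (norm v)\<^sup>2" by (simp only: left_diff_distrib mult_1_left)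
    show ?thesis using e1 e2 e3 unfolding u_def by linarith
  qed
  have q1: "q \<le> 1"
  proof -
    have "0 \<le> (1 - q) * (norm v0)\<^sup>2"
      using key[OF v0(1) refl] by (rule order_trans[OF zero_le_power2])
    moreover have "(norm v0)\<^sup>2 > 0" using v0 by simp
    ultimately show ?thesis
    proof (cases "q \<le> 1")
      case False
      then have "1 - q < 0" by simp
      then have "(1 - q) * (norm v0)\<^sup>2 < 0" using \<open>(norm v0)\<^sup>2 > 0\<close> by (rule mult_neg_pos)
      then show ?thesis using \<open>0 \<le> (1 - q) * (norm v0)\<^sup>2\<close> by simp
    qed
  qed
  have rho0: "0 \<le> \<rho>" unfolding rho using q1 by simp
  have rho1: "\<rho> < 1" unfolding rho using qpos real_sqrt_less_iff[of "1 - q" 1] by simp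
  have step: "\<exists>t::real. norm (v - t *\<^sub>R (M *v v)) \<le> \<rho> * norm v" for v
  proof (cases "v = 0")
    case True then show ?thesis by (auto intro: exI[of _ 0])
  next
    case False
    define t where "t = inner v (M *v v) / (norm (M *v v))\<^sup>2"
    have "(norm (v - t *\<^sub>R (M *v v)))\<^sup>2 \<le> (\<rho> * norm v)\<^sup>2"
    proof -
      have E: "(\<rho> * norm v)\<^sup>2 = (1 - q) * (norm v)\<^sup>2"
        unfolding rho power_mult_distrib using q1 by simp
      show ?thesis unfolding E by (rule key[OF False t_def])
    qed
    then have "norm (v - t *\<^sub>R (M *v v)) \<le> \<rho> * norm v"
      by (rule power2_le_imp_le) (simp add: rho0)
    then show ?thesis by blast
  qed
  show ?thesis using rho0 rho1 step inj by blast
qed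

lemma poly_mv: "poly_mat P A *v v = (\<Sum>d\<le>degree P. coeff P d *s (mat_pow A d *v (v::complex^'n)))"
proof -
  have "(poly_mat P A *v v) $ i = (\<Sum>d\<le>degree P. coeff P d *s (mat_pow A d *v v)) $ i" for i
  proof -
    have "(poly_mat P A *v v) $ i = (\<Sum>j\<in>UNIV. \<Sum>d\<le>degree P. coeff P d * mat_pow A d $ i $ j * v $ j)"
      by (simp add: matrix_vector_mult_def poly_mat_def sum_distrib_right)
    also have "\<dots> = (\<Sum>d\<le>degree P. \<Sum>j\<in>UNIV. coeff P d * mat_pow A d $ i $ j * v $ j)"
      by (rule sum.swap)
    also have "\<dots> = (\<Sum>d\<le>degree P. coeff P d *s (mat_pow A d *v v)) $ i"
      by (simp add: sum_component matrix_vector_mult_def sum_distrib_left mult.assoc)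
    finally show ?thesis .
  qed
  then show ?thesis by (simp add: vec_eq_iff)
qed

lemma pow_comm: "mat_pow A d ** A = A ** mat_pow A d"
  by (induction d) (simp_all add: matrix_mul_assoc[symmetric])

lemma mv_sum: "(K::complex^'n^'n) *v sum f S = sum (\<lambda>i. K *v f i) S"
  by (induct S rule: infinite_finite_induct) (simp_all add: matrix_vector_right_distrib)

lemma smult_sum: "(c::complex) *s sum f S = sum (\<lambda>i. c *s f i) S"
  by (simp add: vec_eq_iff sum_component sum_distrib_left)

lemma Gfacts:
  fixes M :: "complex^'n^'n"
  assumes "pos_definite (herm_part M) \<or> neg_definite (herm_part M)"
  defines "\<rho> \<equiv> sqrt (1 - (Inf (cmod ` eigenvalues (herm_part M)) / mat_norm2 M)\<^sup>2)"
  shows "\<rho> < 1 \<and> 0 \<le> \<rho> \<and> (\<forall>v. \<exists>t::real. norm (v - t *\<^sub>R (M *v v)) \<le> \<rho> * norm v)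
     \<and> (\<forall>v. M *v v = 0 \<longrightarrow> v = 0)"
  using assms(1)
proof
  assume "pos_definite (herm_part M)"
  then show ?thesis unfolding \<rho>_def by (rule core)
next
  assume "neg_definite (herm_part M)"
  then have "pos_definite (herm_part (- M))" by (simp add: herm_neg negdef)
  from core[OF this] have C: "\<rho> < 1 \<and> 0 \<le> \<rho> \<and> (\<forall>v. \<exists>t::real. norm (v - t *\<^sub>R ((- M) *v v)) \<le> \<rho> * norm v)
     \<and> (\<forall>v. (- M) *v v = 0 \<longrightarrow> v = 0)"
    unfolding \<rho>_def herm_neg eig_neg norm_neg .
  have "\<exists>t::real. norm (v - t *\<^sub>R (M *v v)) \<le> \<rho> * norm v" for v
  proof -
    obtain t where "norm (v - t *\<^sub>R ((- M) *v v)) \<le> \<rho> * norm v" using C by blast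
    then have "norm (v - (- t) *\<^sub>R (M *v v)) \<le> \<rho> * norm v" by (simp add: negM_mv)
    then show ?thesis by blast
  qed
  then show ?thesis using C by (simp add: negM_mv)
qed

theorem mainTheorem2:
  fixes A :: "complex^'n^'n" and y xs :: "complex^'n"
    and k m :: nat and P :: "complex poly"
    and x :: "int \<Rightarrow> complex^'n" and S :: "nat \<Rightarrow> (complex^'n) set"
    and f :: "complex^'n \<Rightarrow> real"
  assumes km: "k \<ge> 1" "m \<ge> 1"
    and Pdeg: "degree P \<le> k" and P0: "poly P 0 = 0"
    and Hdef: "pos_definite (herm_part (poly_mat P A)) \<or> neg_definite (herm_part (poly_mat P A))"
    and exact: "A *v xs = y"
    and crit: "f = (\<lambda>z. norm (residual A y z)) \<or> f = (\<lambda>z. norm (xs - z))"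
    and sel_oc: "\<forall>n::nat. S n \<subseteq> oc_span A y k m x (int n)"
    and sel_kr: "\<forall>n::nat. krylov_affine A k (x (int n)) (residual A y (x (int n))) \<subseteq> S n"
    and step: "\<forall>n::nat. x (int n + 1) \<in> S n \<and> (\<forall>z\<in>S n. f (x (int n + 1)) \<le> f z)"
  defines "\<rho> \<equiv> sqrt (1 - (Inf (cmod ` eigenvalues (herm_part (poly_mat P A)))
                           / mat_norm2 (poly_mat P A))\<^sup>2)"
  shows "\<rho> < 1 \<and> (\<forall>n::nat. f (x (int n + 1)) \<le> \<rho> * f (x (int n)))
         \<and> (\<lambda>n::nat. x (int n)) \<longlonglongrightarrow> xs"
proof -
  define M where "M = poly_mat P A"
  have G: "\<rho> < 1 \<and> 0 \<le> \<rho> \<and> (\<forall>v. \<exists>t::real. norm (v - t *\<^sub>R (M *v v)) \<le> \<rho> * norm v)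
     \<and> (\<forall>v. M *v v = 0 \<longrightarrow> v = 0)"
    unfolding \<rho>_def M_def by (rule Gfacts[OF Hdef])
  define w where "w v = (\<Sum>i<k. coeff P (Suc i) *s (mat_pow A i *v v))" for v
  have Mw: "M *v v = A *v w v" for v
  proof -
    have "M *v v = (\<Sum>d\<le>degree P. coeff P d *s (mat_pow A d *v v))" unfolding M_def by (rule poly_mv)
    also have "\<dots> = (\<Sum>d\<le>k. coeff P d *s (mat_pow A d *v v))"
      using Pdeg by (intro sum.mono_neutral_left) (auto simp: coeff_eq_0)
    also have "\<dots> = (\<Sum>d<Suc k. coeff P d *s (mat_pow A d *v v))"
      by (simp add: lessThan_Suc_atMost)
    also have "\<dots> = (\<Sum>i<k. coeff P (Suc i) *s (mat_pow A (Suc i) *v v))"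
      using P0 unfolding sum.lessThan_Suc_shift by (simp add: poly_0_coeff_0)
    also have "\<dots> = A *v w v"
      by (simp add: w_def mv_sum mv_smult matrix_vector_mul_assoc)
    finally show ?thesis .
  qed
  have wA: "w (A *v e) = A *v w e" for e
  proof -
    have "mat_pow A i *v (A *v e) = A *v (mat_pow A i *v e)" for i
      by (simp add: matrix_vector_mul_assoc pow_comm)
    then show ?thesis by (simp add: w_def mv_sum mv_smult)
  qed
  have w0: "w 0 = 0" by (simp add: w_def)
  have Ainj: "A *v e = 0 \<Longrightarrow> e = 0" for e
  proof -
    assume "A *v e = 0"
    then have "M *v e = 0" by (simp add: Mw wA[symmetric] w0)
    then show "e = 0" using G by blast
  qed
  have fnn: "f z \<ge> 0" for z using crit by auto
  have dec: "f (x (int n + 1)) \<le> \<rho> * f (x (int n))" for n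
  proof -
    define xn where "xn = x (int n)"
    define r where "r = residual A y xn"
    define e where "e = xs - xn"
    have re: "r = A *v e" unfolding r_def e_def residual_def using exact
      by (simp add: matrix_vector_mult_diff_distrib)
    have inK: "xn + complex_of_real t *s w r \<in> S n" for t
    proof -
      have "xn + (\<Sum>i<k. (complex_of_real t * coeff P (Suc i)) *s (mat_pow A i *v r)) = xn + complex_of_real t *s w r"
        by (simp add: w_def smult_sum vector_smult_assoc)
      then have "xn + complex_of_real t *s w r \<in> krylov_affine A k xn r"
        unfolding krylov_affine_def by (intro CollectI exI[of _ "\<lambda>i. complex_of_real t * coeff P (Suc i)"]) simp
      then show ?thesis using sel_kr unfolding xn_def r_def by blast
    qed
    have "\<exists>z\<in>S n. f z \<le> \<rho> * f xn"
      using crit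
    proof
      assume fr: "f = (\<lambda>z. norm (residual A y z))"
      obtain t where t: "norm (r - t *\<^sub>R (M *v r)) \<le> \<rho> * norm r" using G by blast
      have "residual A y (xn + complex_of_real t *s w r) = r - t *\<^sub>R (M *v r)"
      proof -
        have "residual A y (xn + complex_of_real t *s w r) = (y - A *v xn) - complex_of_real t *s (A *v w r)"
          unfolding residual_def by (simp add: matrix_vector_right_distrib mv_smult)
        also have "\<dots> = r - t *\<^sub>R (M *v r)" unfolding Mw scaleR_smult r_def residual_def ..
        finally show ?thesis .
      qed
      then have "f (xn + complex_of_real t *s w r) \<le> \<rho> * f xn"
        using t unfolding fr r_def by simp
      then show ?thesis using inK by blast
    next
      assume fe: "f = (\<lambda>z. norm (xs - z))"
      obtain t where t: "norm (e - t *\<^sub>R (M *v e)) \<le> \<rho> * norm e" using G by blast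
      have "xs - (xn + complex_of_real t *s w r) = e - t *\<^sub>R (M *v e)"
      proof -
        have "xs - (xn + complex_of_real t *s w r) = e - complex_of_real t *s w (A *v e)"
          unfolding e_def re by simp
        also have "\<dots> = e - t *\<^sub>R (M *v e)" unfolding wA Mw scaleR_smult ..
        finally show ?thesis .
      qed
      then have "f (xn + complex_of_real t *s w r) = norm (e - t *\<^sub>R (M *v e))" unfolding fe by simp
      moreover have "f xn = norm e" unfolding fe e_def ..
      ultimately have "f (xn + complex_of_real t *s w r) \<le> \<rho> * f xn"
        using t by simp
      then show ?thesis using inK by blast
    qed
    then show ?thesis using step unfolding xn_def by force
  qed
  have geo: "f (x (int n)) \<le> \<rho> ^ n * f (x 0)" for n
  proof (induction n)
    case 0 then show ?case by simp
  next
    case (Suc n)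
    have "f (x (int (Suc n))) = f (x (int n + 1))" by (simp add: add.commute)
    also have "\<dots> \<le> \<rho> * f (x (int n))" by (rule dec)
    also have "\<dots> \<le> \<rho> * (\<rho> ^ n * f (x 0))" using Suc G by (intro mult_left_mono) auto
    finally show ?case by simp
  qed
  have lim0: "(\<lambda>n. f (x (int n))) \<longlonglongrightarrow> 0"
  proof (rule tendsto_sandwich[of "\<lambda>_. 0" _ _ "\<lambda>n. \<rho> ^ n * f (x 0)"])
    show "\<forall>\<^sub>F n in sequentially. 0 \<le> f (x (int n))" using fnn by simp
    show "\<forall>\<^sub>F n in sequentially. f (x (int n)) \<le> \<rho> ^ n * f (x 0)" using geo by simp
    show "(\<lambda>n. \<rho> ^ n * f (x 0)) \<longlonglongrightarrow> 0"
      using G by (intro tendsto_mult_left_zero LIMSEQ_power_zero) auto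
  qed simp
  have err: "(\<lambda>n. xs - x (int n)) \<longlonglongrightarrow> 0"
    using crit
  proof
    assume fe: "f = (\<lambda>z. norm (xs - z))"
    then show ?thesis using lim0 by (simp add: tendsto_norm_zero_iff)
  next
    assume fr: "f = (\<lambda>z. norm (residual A y z))"
    have rl: "(\<lambda>n. A *v (xs - x (int n))) \<longlonglongrightarrow> 0"
      using lim0 exact unfolding fr residual_def
      by (simp add: tendsto_norm_zero_iff matrix_vector_mult_diff_distrib)
    have "linear ((*v) A)" by (rule bounded_linear.linear[OF matrix_vector_mul_bounded_linear])
    moreover have "inj ((*v) A)"
      by (rule injI) (metis Ainj eq_iff_diff_eq_0 matrix_vector_mult_diff_distrib)
    ultimately obtain g where g: "linear g" "g \<circ> (*v) A = id"
      using linear_injective_left_inverse by blast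
    have bl: "bounded_linear g" using g(1) by (simp add: linear_conv_bounded_linear)
    have "(\<lambda>n. g (A *v (xs - x (int n)))) \<longlonglongrightarrow> g 0"
      by (rule bounded_linear.tendsto[OF bl rl])
    moreover have "g (A *v v) = v" for v using g(2) by (metis comp_apply id_apply)
    moreover have "g 0 = 0" using g(1) by (rule linear_0)
    ultimately show ?thesis by simp
  qed
  have "(\<lambda>n. xs - (xs - x (int n))) \<longlonglongrightarrow> xs - 0"
    by (intro tendsto_diff tendsto_const err)
  then have "(\<lambda>n. x (int n)) \<longlonglongrightarrow> xs" by simp
  then show ?thesis using G dec by blast
qed

end
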